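(* Let $A\in SL(3,\mathbb{Z})$ be hyperbolic (no eigenvalue of modulus $1$). If $B\in SL(3,\mathbb{Z})$ satisfies $AB=BA$, then either $B=\mathrm{Id}$ or $B$ is hyperbolic. *)

theory Defs
  imports "HOL-Analysis.Analysis"
begin

definition cmat :: "int^3^3 \<Rightarrow> complex^3^3" where
  "cmat A = (\<chi> i j. of_int (A $ i $ j))"

definition is_eigenvalue :: "int^3^3 \<Rightarrow> complex \<Rightarrow> bool" where
  "is_eigenvalue A \<mu> \<longleftrightarrow> (\<exists>v. v \<noteq> 0 \<and> cmat A *v v = \<mu> *s v)"

definition SL3Z :: "int^3^3 \<Rightarrow> bool" where
  "SL3Z A \<longleftrightarrow> det A = 1"

definition hyperbolic :: "int^3^3 \<Rightarrow> bool" where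
  "hyperbolic A \<longleftrightarrow> (\<forall>\<mu>. is_eigenvalue A \<mu> \<longrightarrow> cmod \<mu> \<noteq> 1)"

end

theory Submission imports Defs begin

definition tr3 :: "'a::comm_ring_1^3^3 \<Rightarrow> 'a" where
  "tr3 M = M$1$1 + M$2$2 + M$3$3"
definition s3 :: "'a::comm_ring_1^3^3 \<Rightarrow> 'a" where
  "s3 M = M$1$1*M$2$2 - M$1$2*M$2$1 + M$1$1*M$3$3 - M$1$3*M$3$1 + M$2$2*M$3$3 - M$2$3*M$3$2"
definition adj3 :: "'a::comm_ring_1^3^3 \<Rightarrow> 'a^3^3" where
  "adj3 M = M ** M - mat (tr3 M) ** M + mat (s3 M)"

lemma adj3_entries:
  fixes M :: "'a::comm_ring_1^3^3"
  shows "adj3 M $1$1 = M$2$2*M$3$3 - M$2$3*M$3$2"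
    "adj3 M $1$2 = M$1$3*M$3$2 - M$1$2*M$3$3"
    "adj3 M $1$3 = M$1$2*M$2$3 - M$1$3*M$2$2"
    "adj3 M $2$1 = M$2$3*M$3$1 - M$2$1*M$3$3"
    "adj3 M $2$2 = M$1$1*M$3$3 - M$1$3*M$3$1"
    "adj3 M $2$3 = M$1$3*M$2$1 - M$1$1*M$2$3"
    "adj3 M $3$1 = M$2$1*M$3$2 - M$2$2*M$3$1"
    "adj3 M $3$2 = M$1$2*M$3$1 - M$1$1*M$3$2"
    "adj3 M $3$3 = M$1$1*M$2$2 - M$1$2*M$2$1"
  by (simp_all add: adj3_def tr3_def s3_def matrix_matrix_mult_def mat_def sum_3 algebra_simps)

lemma adj3_mult:
  fixes M :: "'a::comm_ring_1^3^3"
  shows "adj3 M ** M = mat (det M)"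
  by (simp add: vec_eq_iff forall_3 matrix_matrix_mult_def sum_3 mat_def det_3 adj3_entries algebra_simps)

lemma adj3_adj3:
  fixes M :: "'a::comm_ring_1^3^3"
  shows "adj3 (adj3 M) = mat (det M) ** M"
  by (simp add: vec_eq_iff forall_3 matrix_matrix_mult_def sum_3 mat_def det_3 adj3_entries algebra_simps)

lemma det_zero_of_kernel:
  fixes M :: "'a::idom^3^3"
  assumes "M *v v = 0" "v \<noteq> 0"
  shows "det M = 0"
proof -
  have "(adj3 M ** M) *v v = 0" using assms(1) by (simp add: matrix_vector_mul_assoc[symmetric])
  hence "mat (det M) *v v = 0" by (simp add: adj3_mult)
  thus ?thesis using assms(2) by (simp add: vec_eq_iff matrix_vector_mult_def mat_def sum_3 forall_3) blast
qed

lemma minors: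
  fixes D :: "'a::comm_ring_1^3^3"
  assumes "adj3 D = 0"
  shows "D$i$j * D$k$l = D$i$l * D$k$j"
proof -
  have e: "D$2$2*D$3$3 = D$2$3*D$3$2" "D$1$3*D$3$2 = D$1$2*D$3$3" "D$1$2*D$2$3 = D$1$3*D$2$2"
    "D$2$3*D$3$1 = D$2$1*D$3$3" "D$1$1*D$3$3 = D$1$3*D$3$1" "D$1$3*D$2$1 = D$1$1*D$2$3"
    "D$2$1*D$3$2 = D$2$2*D$3$1" "D$1$2*D$3$1 = D$1$1*D$3$2" "D$1$1*D$2$2 = D$1$2*D$2$1"
    using assms adj3_entries[of D] by (simp_all add: vec_eq_iff forall_3)
  show ?thesis
    using exhaust_3[of i] exhaust_3[of j] exhaust_3[of k] exhaust_3[of l]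
    by (auto simp: e mult.commute) (auto simp: e[symmetric] mult.commute)
qed


lemma ratroot:
  fixes m d t s :: int
  assumes "d \<noteq> 0" "d^3 + t*m^2*d = m^3 + s*m*d^2"
  shows "\<bar>m\<bar> = \<bar>d\<bar>"
proof -
  define g where "g = gcd m d"
  have g0: "g \<noteq> 0" using assms(1) by (simp add: g_def)
  obtain m' d' where m: "m = m'*g" and d: "d = d'*g" and cop: "coprime m' d'"
    using gcd_coprime_exists[of m d] g0 unfolding g_def by blast
  have "g^3 * (d'^3 + t*m'^2*d' - m'^3 - s*m'*d'^2) = 0"
    using assms(2) unfolding m d by algebra
  hence e: "d'^3 + t*m'^2*d' - m'^3 - s*m'*d'^2 = 0" using g0 by simp
  have "m'^3 = d' * (t*m'^2 - s*m'*d' + d'^2)" using e by algebra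
  hence "d' dvd m'^3" by (rule dvdI)
  moreover have "coprime d' (m'^3)" using cop by (simp add: coprime_commute)
  ultimately have u1: "is_unit d'" using coprime_absorb_left by blast
  have "d'^3 = m' * (m'^2 - t*m'*d' + s*d'^2)" using e by algebra
  hence "m' dvd d'^3" by (rule dvdI)
  moreover have "coprime m' (d'^3)" using cop by simp
  ultimately have u2: "is_unit m'" using coprime_absorb_left by blast
  from u1 u2 show ?thesis unfolding m d by (simp add: abs_mult)
qed


lemma mul_diff_l: "(A::'a::comm_ring_1^3^3) ** (X - Y) = A ** X - A ** Y"
  by (simp add: matrix_matrix_mult_def vec_eq_iff sum_subtractf algebra_simps)
lemma mul_diff_r: "((X::'a::comm_ring_1^3^3) - Y) ** A = X ** A - Y ** A"
  by (simp add: matrix_matrix_mult_def vec_eq_iff sum_subtractf algebra_simps)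
lemma mul_add_r: "((X::'a::comm_ring_1^3^3) + Y) ** A = X ** A + Y ** A"
  by (simp add: matrix_matrix_mult_def vec_eq_iff sum.distrib algebra_simps)
lemma mat_comm: "(A::'a::comm_ring_1^3^3) ** mat k = mat k ** A"
  by (simp add: vec_eq_iff forall_3 matrix_matrix_mult_def sum_3 mat_def)

lemma comm_adj3:
  fixes A C :: "'a::comm_ring_1^3^3"
  assumes "A ** C = C ** A"
  shows "A ** adj3 C = adj3 C ** A"
proof -
  have 1: "A ** (C ** C) = (C ** C) ** A"
    by (metis assms matrix_mul_assoc)
  have 2: "A ** (mat t ** C) = (mat t ** C) ** A" for t
    by (metis assms matrix_mul_assoc mat_comm)
  show ?thesis unfolding adj3_def
    by (simp add: matrix_add_ldistrib mul_diff_l mul_diff_r mul_add_r 1 2 mat_comm)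
qed

lemma cp:
  fixes M :: "'a::comm_ring_1^3^3"
  shows "det (M - mat k) + k^3 = tr3 M * k^2 - s3 M * k + det M"
  by (simp add: det_3 tr3_def s3_def mat_def algebra_simps power2_eq_square power3_eq_cube)

lemma cp_scaled:
  fixes M :: "'a::comm_ring_1^3^3"
  shows "det (mat d ** M - mat m) + m^3 = tr3 M * m^2 * d - s3 M * m * d^2 + d^3 * det M"
  by (simp add: det_3 tr3_def s3_def mat_def matrix_matrix_mult_def sum_3 algebra_simps power2_eq_square power3_eq_cube)

lemma cmat_facts:
  "tr3 (cmat B) = of_int (tr3 B)" "s3 (cmat B) = of_int (s3 B)" "det (cmat B) = of_int (det B)"
  by (simp_all add: cmat_def tr3_def s3_def det_3)


lemma matvec_mat: "mat k *v (v::'a::comm_ring_1^'n) = k *s v"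
  by (simp add: vec_eq_iff matrix_vector_mult_def mat_def if_distrib if_distribR sum.delta' cong: if_cong)

lemma key:
  fixes A C :: "int^3^3"
  assumes dA: "det A = 1" and hA: "hyperbolic A" and comm: "A ** C = C ** A"
    and dC: "det C = 0" and C0: "C \<noteq> 0"
  shows False
proof -
  define D where "D = (if adj3 C = 0 then C else adj3 C)"
  have D0: "D \<noteq> 0" using C0 by (simp add: D_def)
  have Dadj: "adj3 D = 0"
    by (simp add: D_def adj3_adj3 dC)
  have Dcomm: "A ** D = D ** A" using comm comm_adj3[OF comm] by (simp add: D_def)
  obtain k l where dk: "D$k$l \<noteq> 0" using D0 by (auto simp: vec_eq_iff)
  define d where "d = D$k$l"
  define m where "m = (D ** A)$k$l"
  define c where "c = (\<chi> i. D$i$l)"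
  have ev: "d * (A *v c)$i = m * c$i" for i
  proof -
    have "(A *v c)$i = (A ** D)$i$l" by (simp add: matrix_vector_mult_def matrix_matrix_mult_def c_def)
    also have "\<dots> = (D ** A)$i$l" using Dcomm by simp
    finally have "d * (A *v c)$i = (\<Sum>j\<in>UNIV. d * D$i$j * A$j$l)"
      by (simp add: matrix_matrix_mult_def sum_distrib_left mult.assoc)
    also have "\<dots> = (\<Sum>j\<in>UNIV. D$i$l * (D$k$j * A$j$l))"
    proof (rule sum.cong)
      fix j
      have "D$i$j * D$k$l = D$i$l * D$k$j" by (rule minors[OF Dadj])
      thus "d * D$i$j * A$j$l = D$i$l * (D$k$j * A$j$l)"
        by (simp add: d_def mult.commute mult.left_commute)
    qed simp
    also have "\<dots> = m * c$i"
      by (simp add: m_def c_def matrix_matrix_mult_def sum_distrib_left mult.commute)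
    finally show ?thesis .
  qed
  have dnz: "d \<noteq> 0" using dk d_def by simp
  have c0: "c \<noteq> 0"
  proof
    assume "c = 0"
    hence "c$k = 0" by simp
    thus False using dnz by (simp add: c_def d_def)
  qed
  have "(mat d ** A - mat m) *v c = 0"
    by (simp add: vec_eq_iff matrix_vector_mult_diff_rdistrib matrix_vector_mul_assoc[symmetric] matvec_mat ev)
  hence "det (mat d ** A - mat m) = 0" using c0 by (rule det_zero_of_kernel)
  with cp_scaled[of d A m] dA have "d^3 + tr3 A * m^2 * d = m^3 + s3 A * m * d^2" by simp
  hence "\<bar>m\<bar> = \<bar>d\<bar>" using dnz ratroot by blast
  hence md: "m = d \<or> m = - d" by arith
  define e :: complex where "e = (if m = d then 1 else -1)"
  have Ac: "(A *v c)$i = (if m = d then c$i else - c$i)" for i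
  proof -
    have "d * (A *v c)$i = d * (if m = d then c$i else - c$i)" using ev[of i] md by auto
    thus ?thesis using dnz by simp
  qed
  define v where "v = (\<chi> i. (of_int (c$i) :: complex))"
  have v0: "v \<noteq> 0"
  proof
    assume "v = 0"
    hence "v$k = 0" by simp
    thus False using dnz by (simp add: v_def c_def d_def)
  qed
  have "cmat A *v v = e *s v"
  proof -
    have "(cmat A *v v)$i = of_int ((A *v c)$i)" for i
      by (simp add: cmat_def matrix_vector_mult_def v_def)
    thus ?thesis by (simp add: vec_eq_iff Ac e_def v_def)
  qed
  hence "is_eigenvalue A e" using v0 by (auto simp: is_eigenvalue_def)
  moreover have "cmod e = 1" by (simp add: e_def)
  ultimately show False using hA by (auto simp: hyperbolic_def)
qed

theorem mainTheorem13:
  fixes A B :: "int^3^3"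
  assumes "SL3Z A" and "hyperbolic A"
    and "SL3Z B" and "A ** B = B ** A"
  shows "B = mat 1 \<or> hyperbolic B"
proof (rule disjCI)
  assume "\<not> hyperbolic B"
  then obtain \<mu> where eig: "is_eigenvalue B \<mu>" and mu1: "cmod \<mu> = 1"
    by (auto simp: hyperbolic_def)
  then obtain v where v0: "v \<noteq> 0" and ev: "cmat B *v v = \<mu> *s v"
    by (auto simp: is_eigenvalue_def)
  have dB: "det B = 1" using assms(3) by (simp add: SL3Z_def)
  have dA: "det A = 1" using assms(1) by (simp add: SL3Z_def)
  have "(cmat B - mat \<mu>) *v v = 0"
    by (simp add: matrix_vector_mult_diff_rdistrib matvec_mat ev)
  hence "det (cmat B - mat \<mu>) = 0" using v0 by (rule det_zero_of_kernel)
  with cp[of "cmat B" \<mu>] have e1: "\<mu>^3 = of_int (tr3 B) * \<mu>^2 - of_int (s3 B) * \<mu> + 1"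
    by (simp add: cmat_facts dB)
  define w where "w = cnj \<mu>"
  have h: "\<mu> * w = 1"
    using complex_norm_square[of \<mu>] mu1 by (simp add: w_def)
  have "cnj (\<mu>^3) = cnj (of_int (tr3 B) * \<mu>^2 - of_int (s3 B) * \<mu> + 1)" using e1 by simp
  hence e2: "w^3 = of_int (tr3 B) * w^2 - of_int (s3 B) * w + 1" by (simp add: w_def)
  have "(of_int (s3 B) - of_int (tr3 B)) * \<mu> * (\<mu> + 1) = 0"
    using e1 e2 h by algebra
  moreover have "\<mu> \<noteq> 0" using h by auto
  ultimately have "of_int (s3 B) - of_int (tr3 B) = (0::complex) \<or> \<mu> = -1"
    by (metis eq_neg_iff_add_eq_0 mult_eq_0_iff)
  hence ab: "s3 B = tr3 B \<or> \<mu> = -1" by simp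
  obtain \<epsilon> :: int where eps: "\<epsilon> = 1 \<or> \<epsilon> = -1" and dC: "det (B - mat \<epsilon>) = 0"
  proof (cases "\<mu> = -1")
    case True
    with e1 have "of_int (tr3 B + s3 B + 2) = (0::complex)" by (simp add: algebra_simps)
    hence "tr3 B + s3 B + 2 = 0" by (simp only: of_int_eq_0_iff)
    with cp[of B "-1"] dB have "det (B - mat (-1)) = 0" by simp
    thus ?thesis using that by blast
  next
    case False
    with ab have "s3 B = tr3 B" by simp
    with cp[of B 1] dB have "det (B - mat 1) = 0" by simp
    thus ?thesis using that by blast
  qed
  have comm: "A ** (B - mat \<epsilon>) = (B - mat \<epsilon>) ** A"
    by (simp add: mul_diff_l mul_diff_r mat_comm assms(4))
  have "B - mat \<epsilon> = 0"
  proof (rule ccontr)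
    assume "B - mat \<epsilon> \<noteq> 0"
    from key[OF dA assms(2) comm dC this] show False .
  qed
  hence B: "B = mat \<epsilon>" by simp
  with dB have "\<epsilon>^3 = 1" by (simp add: det_3 mat_def power3_eq_cube)
  with eps have "\<epsilon> = 1" by auto
  with B show "B = mat 1" by simp
qed

end
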